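(* Let $G=(V,E)$ be a simple undirected graph with $V=[n]$ such that $|V|=\chi(\bar G)\,\chi(G)$. Then for every integer $k$ with $1\le k\le\chi(G)$, $$\vartheta_k(G)=\vartheta'_k(G)=\theta^1_k(G)=\theta^2_k(G)=\theta^3_k(G)=k\,\alpha(G)=\alpha_k(G).$$
   Context: $\chi(G)$ is the chromatic number of $G$ and $\bar G$ its complement. $\alpha(G)$ is the stability number; $\alpha_k(G)$ is the maximum number of vertices of an induced $k$-colorable subgraph of $G$. $J$ is the all-ones matrix, $\langle A,B\rangle=\mathrm{trace}(AB)$, $\ge0$ entrywise, $\succeq0$ positive semidefinite, $\mathbb S^n$ symmetric $n\times n$ matrices. $\vartheta_k(G)=\max\{\langle J,Z\rangle: Z\in\mathbb S^n,\ Z_{ij}=0\ (\{i,j\}\in E),\ \langle I,Z\rangle=k,\ Z\succeq0,\ I-Z\succeq0\}$, and $\vartheta'_k(G)$ is the same with the additional constraint $Z\ge0$. $\theta^1_k(G)=\max\langle I,Z\rangle$ over $Z,X\in\mathbb S^n$ subject to $Z_{ij}=0$ for $\{i,j\}\in E$; $X_{ii}=0$ for $i\in[n]$; $Z,X\ge0$; $Z-X\succeq0$; $\begin{bmatrix}1&\mathrm{diag}(Z)^{\top}\\ \mathrm{diag}(Z)&Z+(k-1)X\end{bmatrix}\succeq0$; $1-Z_{ii}-Z_{jj}+Z_{ij}+(k-1)X_{ij}\ge0$ for $i>j$; $Z_{ii}-Z_{ij}-(k-1)X_{ij}\ge0$ for $i\ne j$. $\theta^2_k(G)$ is the optimal value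 of the same problem without the last two families of linear inequalities. $\theta^3_k(G)=\max\{\langle I,Z\rangle: Z\in\mathbb S^n,\ Z_{ij}=0\ (\{i,j\}\in E),\ Z_{ii}\le1,\ Z\ge0,\ \begin{bmatrix}k&\mathrm{diag}(Z)^{\top}\\ \mathrm{diag}(Z)&Z\end{bmatrix}\succeq0\}$. *)

theory Defs
  imports Complex_Main
begin

text \<open>Graphs on the vertex set {0..<n} (standing for [n]); edges are 2-element sets.\<close>

definition simple_graph :: "nat \<Rightarrow> nat set set \<Rightarrow> bool" where
  "simple_graph n E \<longleftrightarrow> (\<forall>e\<in>E. \<exists>i j. e = {i, j} \<and> i \<noteq> j \<and> i < n \<and> j < n)"

definition compl_graph :: "nat \<Rightarrow> nat set set \<Rightarrow> nat set set" where
  "compl_graph n E = {{i, j} | i j. i \<noteq> j \<and> i < n \<and> j < n \<and> {i, j} \<notin> E}"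

definition proper_col_on :: "nat set \<Rightarrow> nat set set \<Rightarrow> nat \<Rightarrow> (nat \<Rightarrow> nat) \<Rightarrow> bool" where
  "proper_col_on S E k c \<longleftrightarrow> (\<forall>v\<in>S. c v < k) \<and>
     (\<forall>u\<in>S. \<forall>v\<in>S. {u, v} \<in> E \<longrightarrow> c u \<noteq> c v)"

definition chromatic_number :: "nat \<Rightarrow> nat set set \<Rightarrow> nat" where
  "chromatic_number n E = (LEAST k. \<exists>c. proper_col_on {0..<n} E k c)"

definition independent_set :: "nat \<Rightarrow> nat set set \<Rightarrow> nat set \<Rightarrow> bool" where
  "independent_set n E S \<longleftrightarrow> S \<subseteq> {0..<n} \<and> (\<forall>u\<in>S. \<forall>v\<in>S. {u, v} \<notin> E)"

definition stability_number :: "nat \<Rightarrow> nat set set \<Rightarrow> nat" where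
  "stability_number n E = Max {card S | S. independent_set n E S}"

definition alpha_k :: "nat \<Rightarrow> nat set set \<Rightarrow> nat \<Rightarrow> nat" where
  "alpha_k n E k = Max {card S | S. S \<subseteq> {0..<n} \<and> (\<exists>c. proper_col_on S E k c)}"

text \<open>Matrices are functions nat => nat => real, only entries with indices < m matter.\<close>

definition sym_mat :: "nat \<Rightarrow> (nat \<Rightarrow> nat \<Rightarrow> real) \<Rightarrow> bool" where
  "sym_mat m A \<longleftrightarrow> (\<forall>i<m. \<forall>j<m. A i j = A j i)"

definition psd :: "nat \<Rightarrow> (nat \<Rightarrow> nat \<Rightarrow> real) \<Rightarrow> bool" where
  "psd m A \<longleftrightarrow> sym_mat m A \<and> (\<forall>x::nat \<Rightarrow> real. (\<Sum>i<m. \<Sum>j<m. x i * A i j * x j) \<ge> 0)"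

definition nonneg_mat :: "nat \<Rightarrow> (nat \<Rightarrow> nat \<Rightarrow> real) \<Rightarrow> bool" where
  "nonneg_mat m A \<longleftrightarrow> (\<forall>i<m. \<forall>j<m. A i j \<ge> 0)"

definition trace_mat :: "nat \<Rightarrow> (nat \<Rightarrow> nat \<Rightarrow> real) \<Rightarrow> real" where
  "trace_mat m A = (\<Sum>i<m. A i i)"

definition sum_entries :: "nat \<Rightarrow> (nat \<Rightarrow> nat \<Rightarrow> real) \<Rightarrow> real" where
  "sum_entries m A = (\<Sum>i<m. \<Sum>j<m. A i j)"

definition id_mat :: "nat \<Rightarrow> nat \<Rightarrow> real" where
  "id_mat i j = (if i = j then 1 else 0)"

text \<open>The (m+1)x(m+1) matrix [[c, d^T],[d, M]], with index 0 for the border.\<close>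
definition bordered :: "real \<Rightarrow> (nat \<Rightarrow> real) \<Rightarrow> (nat \<Rightarrow> nat \<Rightarrow> real) \<Rightarrow> nat \<Rightarrow> nat \<Rightarrow> real" where
  "bordered c d M i j = (if i = 0 \<and> j = 0 then c else if i = 0 then d (j - 1)
      else if j = 0 then d (i - 1) else M (i - 1) (j - 1))"

definition zero_on_edges :: "nat set set \<Rightarrow> (nat \<Rightarrow> nat \<Rightarrow> real) \<Rightarrow> bool" where
  "zero_on_edges E Z \<longleftrightarrow> (\<forall>i j. {i, j} \<in> E \<longrightarrow> Z i j = 0)"

definition vartheta_k :: "nat \<Rightarrow> nat set set \<Rightarrow> nat \<Rightarrow> real" where
  "vartheta_k n E k = Sup {sum_entries n Z | Z. sym_mat n Z \<and> zero_on_edges E Z \<and>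
      trace_mat n Z = real k \<and> psd n Z \<and> psd n (\<lambda>i j. id_mat i j - Z i j)}"

definition vartheta'_k :: "nat \<Rightarrow> nat set set \<Rightarrow> nat \<Rightarrow> real" where
  "vartheta'_k n E k = Sup {sum_entries n Z | Z. sym_mat n Z \<and> zero_on_edges E Z \<and>
      trace_mat n Z = real k \<and> psd n Z \<and> psd n (\<lambda>i j. id_mat i j - Z i j) \<and> nonneg_mat n Z}"

definition theta2_feasible :: "nat \<Rightarrow> nat set set \<Rightarrow> nat \<Rightarrow> (nat \<Rightarrow> nat \<Rightarrow> real) \<Rightarrow> (nat \<Rightarrow> nat \<Rightarrow> real) \<Rightarrow> bool" where
  "theta2_feasible n E k Z X \<longleftrightarrow> sym_mat n Z \<and> sym_mat n X \<and> zero_on_edges E Z \<and>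
      (\<forall>i<n. X i i = 0) \<and> nonneg_mat n Z \<and> nonneg_mat n X \<and>
      psd n (\<lambda>i j. Z i j - X i j) \<and>
      psd (n + 1) (bordered 1 (\<lambda>i. Z i i) (\<lambda>i j. Z i j + (real k - 1) * X i j))"

definition theta1_k :: "nat \<Rightarrow> nat set set \<Rightarrow> nat \<Rightarrow> real" where
  "theta1_k n E k = Sup {trace_mat n Z | Z. \<exists>X. theta2_feasible n E k Z X \<and>
      (\<forall>i<n. \<forall>j<n. i > j \<longrightarrow> 1 - Z i i - Z j j + Z i j + (real k - 1) * X i j \<ge> 0) \<and>
      (\<forall>i<n. \<forall>j<n. i \<noteq> j \<longrightarrow> Z i i - Z i j - (real k - 1) * X i j \<ge> 0)}"

definition theta2_k :: "nat \<Rightarrow> nat set set \<Rightarrow> nat \<Rightarrow> real" where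
  "theta2_k n E k = Sup {trace_mat n Z | Z. \<exists>X. theta2_feasible n E k Z X}"

definition theta3_k :: "nat \<Rightarrow> nat set set \<Rightarrow> nat \<Rightarrow> real" where
  "theta3_k n E k = Sup {trace_mat n Z | Z. sym_mat n Z \<and> zero_on_edges E Z \<and>
      (\<forall>i<n. Z i i \<le> 1) \<and> nonneg_mat n Z \<and>
      psd (n + 1) (bordered (real k) (\<lambda>i. Z i i) Z)}"

end

theory Submission
  imports Defs "HOL-Analysis.Convex"
begin


definition qf :: "nat \<Rightarrow> (nat \<Rightarrow> nat \<Rightarrow> real) \<Rightarrow> (nat \<Rightarrow> real) \<Rightarrow> real" where
  "qf m M x = (\<Sum>i<m. \<Sum>j<m. x i * M i j * x j)"

definition bil :: "nat \<Rightarrow> (nat \<Rightarrow> nat \<Rightarrow> real) \<Rightarrow> (nat \<Rightarrow> real) \<Rightarrow> (nat \<Rightarrow> real) \<Rightarrow> real" where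
  "bil m M x y = (\<Sum>i<m. \<Sum>j<m. x i * M i j * y j)"

lemma qf_lin: "qf m (\<lambda>i j. a * A i j + b * B i j) x = a * qf m A x + b * qf m B x"
  unfolding qf_def by (simp add: algebra_simps sum.distrib sum_distrib_left)

lemma qf_cong: "(\<And>i. i < m \<Longrightarrow> x i = y i) \<Longrightarrow> (\<And>i j. i < m \<Longrightarrow> j < m \<Longrightarrow> A i j = B i j) \<Longrightarrow> qf m A x = qf m B y"
  unfolding qf_def by (intro sum.cong) auto

lemma swap3: "(\<Sum>i\<in>A. \<Sum>j\<in>B. \<Sum>a\<in>C. F i j a) = (\<Sum>a\<in>C. \<Sum>i\<in>A. \<Sum>j\<in>B. F i j a)"
proof -
  have "(\<Sum>i\<in>A. \<Sum>j\<in>B. \<Sum>a\<in>C. F i j a) = (\<Sum>i\<in>A. \<Sum>a\<in>C. \<Sum>j\<in>B. F i j a)"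
    by (rule sum.cong[OF refl], rule sum.swap)
  also have "\<dots> = (\<Sum>a\<in>C. \<Sum>i\<in>A. \<Sum>j\<in>B. F i j a)" by (rule sum.swap)
  finally show ?thesis .
qed

lemma swap4: "(\<Sum>i\<in>A. \<Sum>j\<in>B. \<Sum>a\<in>C. \<Sum>a'\<in>D. F i j a a') = (\<Sum>a\<in>C. \<Sum>a'\<in>D. \<Sum>i\<in>A. \<Sum>j\<in>B. F i j a a')"
proof -
  have "(\<Sum>i\<in>A. \<Sum>j\<in>B. \<Sum>a\<in>C. \<Sum>a'\<in>D. F i j a a') = (\<Sum>a\<in>C. \<Sum>i\<in>A. \<Sum>j\<in>B. \<Sum>a'\<in>D. F i j a a')"
    by (rule swap3)
  also have "\<dots> = (\<Sum>a\<in>C. \<Sum>a'\<in>D. \<Sum>i\<in>A. \<Sum>j\<in>B. F i j a a')"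
    by (rule sum.cong[OF refl], rule swap3)
  finally show ?thesis .
qed

lemma qf_gram: "qf m (\<lambda>i j. \<Sum>a\<in>S. f a i * f a j) x = (\<Sum>a\<in>S. (\<Sum>i<m. f a i * x i)\<^sup>2)"
proof -
  have "qf m (\<lambda>i j. \<Sum>a\<in>S. f a i * f a j) x = (\<Sum>i<m. \<Sum>j<m. \<Sum>a\<in>S. (f a i * x i) * (f a j * x j))"
    unfolding qf_def by (simp add: sum_distrib_left sum_distrib_right algebra_simps)
  also have "\<dots> = (\<Sum>a\<in>S. \<Sum>i<m. \<Sum>j<m. (f a i * x i) * (f a j * x j))"
    by (rule swap3)
  also have "\<dots> = (\<Sum>a\<in>S. (\<Sum>i<m. f a i * x i)\<^sup>2)"
    by (simp add: power2_eq_square sum_product)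
  finally show ?thesis .
qed

lemma qf_rank1: "qf m (\<lambda>i j. g i * g j) x = (\<Sum>i<m. g i * x i)\<^sup>2"
  using qf_gram[where m=m and S="{0::nat}" and f="\<lambda>_. g" and x=x] by simp

lemma qf_diag: "qf m (\<lambda>i j. if i = j then d i else 0) x = (\<Sum>i<m. d i * (x i)\<^sup>2)"
proof -
  have "\<And>i. i < m \<Longrightarrow> (\<Sum>j<m. x i * (if i = j then d i else 0) * x j) = d i * (x i)\<^sup>2"
  proof -
    fix i assume "i < m"
    have "(\<Sum>j<m. x i * (if i = j then d i else 0) * x j) = (\<Sum>j<m. if j = i then d i * (x i)\<^sup>2 else 0)"
      by (intro sum.cong) (auto simp: power2_eq_square)
    then show "(\<Sum>j<m. x i * (if i = j then d i else 0) * x j) = d i * (x i)\<^sup>2" using \<open>i < m\<close> by simp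
  qed
  then show ?thesis unfolding qf_def by (intro sum.cong) auto
qed

lemma qf_bordered: "qf (Suc m) (bordered c d M) y = c * (y 0)\<^sup>2 + 2 * y 0 * (\<Sum>i<m. d i * y (Suc i)) + qf m M (\<lambda>i. y (Suc i))"
  unfolding qf_def bordered_def
  by (simp only: sum.lessThan_Suc_shift) (simp add: sum.distrib sum_distrib_left sum_distrib_right algebra_simps power2_eq_square)
lemma bil_sym: "sym_mat m M \<Longrightarrow> bil m M x y = bil m M y x"
  unfolding bil_def sym_mat_def
  by (subst sum.swap) (auto intro!: sum.cong simp: algebra_simps)

lemma qf_diff: "sym_mat m M \<Longrightarrow> qf m M (\<lambda>i. x i - y i) = qf m M x - 2 * bil m M x y + qf m M y"
proof -
  assume s: "sym_mat m M"
  have "qf m M (\<lambda>i. x i - y i) = qf m M x - bil m M x y - bil m M y x + qf m M y"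
    unfolding qf_def bil_def by (simp add: algebra_simps sum.distrib sum_subtractf)
  then show ?thesis using bil_sym[OF s, of x y] by simp
qed

lemma bil_le: "psd m M \<Longrightarrow> 2 * bil m M x y \<le> qf m M x + qf m M y"
proof -
  assume p: "psd m M"
  then have "0 \<le> qf m M (\<lambda>i. x i - y i)" unfolding psd_def qf_def by auto
  with qf_diff[of m M x y] p show ?thesis unfolding psd_def by simp
qed

lemma qf_sum_expand: "qf m M (\<lambda>i. \<Sum>b\<in>B. v b i) = (\<Sum>b\<in>B. \<Sum>b'\<in>B. bil m M (v b) (v b'))"
proof -
  have "qf m M (\<lambda>i. \<Sum>b\<in>B. v b i) = (\<Sum>i<m. \<Sum>j<m. \<Sum>b\<in>B. \<Sum>b'\<in>B. v b i * M i j * v b' j)"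
    unfolding qf_def by (simp add: sum_distrib_left sum_distrib_right algebra_simps)
  also have "\<dots> = (\<Sum>b\<in>B. \<Sum>b'\<in>B. \<Sum>i<m. \<Sum>j<m. v b i * M i j * v b' j)"
    by (rule swap4)
  finally show ?thesis unfolding bil_def .
qed

lemma psd_qf: "psd m A \<longleftrightarrow> sym_mat m A \<and> (\<forall>x. qf m A x \<ge> 0)"
  by (simp add: psd_def qf_def)

lemma clique_bound:
  assumes p: "psd n M" and g: "\<forall>i<n. g i < m"
  shows "qf n M (\<lambda>_. 1) \<le> real m * (\<Sum>b<m. qf n M (\<lambda>i. if g i = b then 1 else 0))"
proof -
  define v where "v = (\<lambda>b i. if g i = b then (1::real) else 0)"
  have "qf n M (\<lambda>_. 1) = qf n M (\<lambda>i. \<Sum>b<m. v b i)"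
    by (rule qf_cong) (use g in \<open>auto simp: v_def\<close>)
  also have "\<dots> = (\<Sum>b<m. \<Sum>b'<m. bil n M (v b) (v b'))"
    by (rule qf_sum_expand)
  also have "\<dots> \<le> (\<Sum>b<m. \<Sum>b'<m. (qf n M (v b) + qf n M (v b')) / 2)"
  proof (intro sum_mono)
    fix b b' show "bil n M (v b) (v b') \<le> (qf n M (v b) + qf n M (v b')) / 2"
      using bil_le[OF p, of "v b" "v b'"] by simp
  qed
  also have "\<dots> = real m * (\<Sum>b<m. qf n M (v b))"
    by (simp add: add_divide_distrib sum.distrib flip: sum_divide_distrib sum_distrib_left)
  finally show ?thesis by (simp add: v_def)
qed

lemma clique_qf:
  assumes "\<forall>i<n. \<forall>j<n. i \<noteq> j \<and> g i = g j \<longrightarrow> M i j = 0"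
  shows "qf n M (\<lambda>i. if g i = b then 1 else 0) = (\<Sum>i<n. if g i = b then M i i else 0)"
  unfolding qf_def
proof (intro sum.cong refl)
  fix i assume i: "i \<in> {..<n}"
  have "(\<Sum>j<n. (if g i = b then 1 else 0) * M i j * (if g j = b then 1 else 0))
      = (\<Sum>j<n. if j = i then (if g i = b then M i i else 0) else 0)"
    by (intro sum.cong) (use assms i in auto)
  then show "(\<Sum>j<n. (if g i = b then 1 else 0) * M i j * (if g j = b then 1 else 0))
      = (if g i = b then M i i else 0)" using i by simp
qed

lemma sum_classes:
  fixes g :: "nat \<Rightarrow> nat"
  assumes "\<forall>i<n. g i < m"
  shows "(\<Sum>b<m. \<Sum>i<n. if g i = b then (h i::real) else 0) = (\<Sum>i<n. h i)"
proof (subst sum.swap, intro sum.cong refl)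
  fix i assume "i \<in> {..<n}"
  then have "g i \<in> {..<m}" using assms by auto
  then show "(\<Sum>b<m. if g i = b then h i else 0) = h i"
    by simp
qed

lemma bordered_sub:
  assumes "psd (Suc m) (bordered cc d M)"
  shows "qf m M x \<ge> 0"
proof -
  have "qf (Suc m) (bordered cc d M) (\<lambda>i. if i = 0 then 0 else x (i - 1)) \<ge> 0"
    using assms by (simp add: psd_qf)
  then show ?thesis by (simp add: qf_bordered)
qed

lemma bordered_schur:
  assumes "psd (Suc m) (bordered cc d M)" and "cc > 0"
  shows "(\<Sum>i<m. d i * x i)\<^sup>2 \<le> cc * qf m M x"
proof -
  define D where "D = (\<Sum>i<m. d i * x i)"
  define t where "t = - D / cc"
  have "qf (Suc m) (bordered cc d M) (\<lambda>i. if i = 0 then t else x (i - 1)) \<ge> 0"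
    using assms by (simp add: psd_qf)
  then have "cc * t\<^sup>2 + 2 * t * D + qf m M x \<ge> 0" by (simp add: qf_bordered D_def)
  moreover have "cc * t\<^sup>2 + 2 * t * D = - D\<^sup>2 / cc"
    using assms(2) by (simp add: t_def field_simps power2_eq_square)
  ultimately have "D\<^sup>2 / cc \<le> qf m M x" by simp
  then show ?thesis using assms(2) by (simp add: D_def field_simps)
qed




locale cfg =
  fixes n :: nat and E :: "nat set set" and k :: nat and c c' :: "nat \<Rightarrow> nat" and chi chi' :: nat
  assumes sg: "simple_graph n E"
    and col: "proper_col_on {0..<n} E chi c"
    and col': "proper_col_on {0..<n} (compl_graph n E) chi' c'"
    and nprod: "n = chi' * chi"
    and npos: "0 < n" and k1: "1 \<le> k" and kchi: "k \<le> chi"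
begin

lemma edge: "{i, j} \<in> E \<Longrightarrow> i < n \<and> j < n \<and> i \<noteq> j"
  using sg unfolding simple_graph_def by (auto simp: doubleton_eq_iff)

lemma edge_col: "{i, j} \<in> E \<Longrightarrow> c i \<noteq> c j"
  using edge[of i j] col unfolding proper_col_on_def by auto

lemma c_lt: "i < n \<Longrightarrow> c i < chi"
  using col unfolding proper_col_on_def by auto

lemma c'_lt: "i < n \<Longrightarrow> c' i < chi'"
  using col' unfolding proper_col_on_def by auto

lemma compl_mem: "i < n \<Longrightarrow> j < n \<Longrightarrow> i \<noteq> j \<Longrightarrow> {i, j} \<notin> E \<Longrightarrow> c' i \<noteq> c' j"
proof -
  assume "i < n" "j < n" "i \<noteq> j" "{i, j} \<notin> E"
  then have "{i, j} \<in> compl_graph n E" unfolding compl_graph_def by blast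
  then show ?thesis using col' \<open>i < n\<close> \<open>j < n\<close> unfolding proper_col_on_def by auto
qed

lemma clique: "i < n \<Longrightarrow> j < n \<Longrightarrow> i \<noteq> j \<Longrightarrow> c' i = c' j \<Longrightarrow> {i, j} \<in> E"
  using compl_mem by blast

lemma inj2: "i < n \<Longrightarrow> j < n \<Longrightarrow> c i = c j \<Longrightarrow> c' i = c' j \<Longrightarrow> i = j"
  using clique edge_col by blast

definition phi where "phi v = (c v, c' v)"

lemma phi_inj: "inj_on phi {..<n}"
  unfolding inj_on_def phi_def using inj2 by auto

lemma phi_img: "phi ` {..<n} = {..<chi} \<times> {..<chi'}"
proof (rule card_subset_eq)
  show "finite ({..<chi} \<times> {..<chi'})" by simp
  show "phi ` {..<n} \<subseteq> {..<chi} \<times> {..<chi'}" using c_lt c'_lt by (auto simp: phi_def)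
  show "card (phi ` {..<n}) = card ({..<chi} \<times> {..<chi'})"
    using phi_inj nprod by (simp add: card_image card_cartesian_product)
qed

lemma card_cls: assumes "A \<subseteq> {..<chi}" shows "card {v\<in>{..<n}. c v \<in> A} = card A * chi'"
proof -
  have "phi ` {v\<in>{..<n}. c v \<in> A} = A \<times> {..<chi'}"
  proof
    show "phi ` {v\<in>{..<n}. c v \<in> A} \<subseteq> A \<times> {..<chi'}" using c'_lt by (auto simp: phi_def)
    show "A \<times> {..<chi'} \<subseteq> phi ` {v\<in>{..<n}. c v \<in> A}"
    proof
      fix p assume p: "p \<in> A \<times> {..<chi'}"
      then have "p \<in> phi ` {..<n}" using phi_img assms by auto
      then obtain v where "v < n" "p = phi v" by auto
      then show "p \<in> phi ` {v\<in>{..<n}. c v \<in> A}" using p by (auto simp: phi_def)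
    qed
  qed
  moreover have "inj_on phi {v\<in>{..<n}. c v \<in> A}" using phi_inj by (rule inj_on_subset) auto
  then have "card {v\<in>{..<n}. c v \<in> A} = card (phi ` {v\<in>{..<n}. c v \<in> A})" by (simp add: card_image)
  ultimately show ?thesis by (simp add: card_cartesian_product)
qed

lemma chi_pos: "chi \<ge> 1" using k1 kchi by simp

lemma chi'_pos: "chi' \<ge> 1" using npos nprod by (cases chi') auto


lemma indep_le: "independent_set n E S \<Longrightarrow> card S \<le> chi'"
proof -
  assume S: "independent_set n E S"
  have "inj_on c' S"
  proof (rule inj_onI)
    fix u v assume "u \<in> S" "v \<in> S" "c' u = c' v"
    moreover have "u < n" "v < n" using S \<open>u \<in> S\<close> \<open>v \<in> S\<close> unfolding independent_set_def by auto
    moreover have "{u, v} \<notin> E" using S \<open>u \<in> S\<close> \<open>v \<in> S\<close> unfolding independent_set_def by auto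
    ultimately show "u = v" using clique[of u v] by blast
  qed
  moreover have "c' ` S \<subseteq> {..<chi'}" using S c'_lt unfolding independent_set_def by auto
  ultimately show ?thesis by (metis card_image card_lessThan card_mono finite_lessThan)
qed

lemma stab: "stability_number n E = chi'"
  unfolding stability_number_def
proof (rule Max_eqI)
  show "finite {card S |S. independent_set n E S}"
    by (rule finite_subset[of _ "{..chi'}"]) (use indep_le in auto)
  show "\<And>y. y \<in> {card S |S. independent_set n E S} \<Longrightarrow> y \<le> chi'" using indep_le by auto
  let ?S = "{v\<in>{..<n}. c v \<in> {0}}"
  have "card ?S = chi'" using card_cls[of "{0}"] chi_pos by simp
  moreover have "independent_set n E ?S"
    unfolding independent_set_def using edge_col by fastforce
  ultimately show "chi' \<in> {card S |S. independent_set n E S}" by blast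
qed

lemma colk_le: "S \<subseteq> {0..<n} \<Longrightarrow> proper_col_on S E k d \<Longrightarrow> card S \<le> k * chi'"
proof -
  assume S: "S \<subseteq> {0..<n}" and d: "proper_col_on S E k d"
  have "inj_on (\<lambda>v. (d v, c' v)) S"
  proof (rule inj_onI)
    fix u v assume "u \<in> S" "v \<in> S" "(d u, c' u) = (d v, c' v)"
    moreover have "u < n" "v < n" using S \<open>u \<in> S\<close> \<open>v \<in> S\<close> by auto
    ultimately show "u = v" using d clique[of u v] \<open>u \<in> S\<close> \<open>v \<in> S\<close> unfolding proper_col_on_def by fastforce
  qed
  moreover have "(\<lambda>v. (d v, c' v)) ` S \<subseteq> {..<k} \<times> {..<chi'}"
    using S c'_lt d unfolding proper_col_on_def by auto
  ultimately show ?thesis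
    by (metis card_image card_lessThan card_mono finite_lessThan card_cartesian_product finite_SigmaI)
qed

lemma alphak: "alpha_k n E k = k * chi'"
  unfolding alpha_k_def
proof (rule Max_eqI)
  show "finite {card S |S. S \<subseteq> {0..<n} \<and> (\<exists>c. proper_col_on S E k c)}"
    by (rule finite_subset[of _ "{..k*chi'}"]) (use colk_le in auto)
  show "\<And>y. y \<in> {card S |S. S \<subseteq> {0..<n} \<and> (\<exists>c. proper_col_on S E k c)} \<Longrightarrow> y \<le> k * chi'"
    using colk_le by auto
  let ?S = "{v\<in>{..<n}. c v \<in> {..<k}}"
  have "card ?S = k * chi'" using card_cls[of "{..<k}"] kchi by simp
  moreover have "proper_col_on ?S E k c"
    unfolding proper_col_on_def using edge_col by auto
  moreover have "?S \<subseteq> {0..<n}" by auto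
  ultimately show "k * chi' \<in> {card S |S. S \<subseteq> {0..<n} \<and> (\<exists>c. proper_col_on S E k c)}"
    unfolding mem_Collect_eq by (intro exI[of _ ?S]) auto
qed

lemma tr_bound:
  assumes "psd n M" "zero_on_edges E M"
  shows "qf n M (\<lambda>_. 1) \<le> real chi' * trace_mat n M"
proof -
  have "qf n M (\<lambda>_. 1) \<le> real chi' * (\<Sum>b<chi'. qf n M (\<lambda>i. if c' i = b then 1 else 0))"
    by (rule clique_bound) (use assms c'_lt in auto)
  also have "(\<Sum>b<chi'. qf n M (\<lambda>i. if c' i = b then 1 else 0)) = (\<Sum>b<chi'. \<Sum>i<n. if c' i = b then M i i else 0)"
    by (intro sum.cong refl clique_qf) (use assms clique in \<open>auto simp: zero_on_edges_def\<close>)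
  also have "\<dots> = trace_mat n M" unfolding trace_mat_def by (rule sum_classes) (use c'_lt in auto)
  finally show ?thesis .
qed

lemma sq_le: "(T::real)\<^sup>2 \<le> K * T \<Longrightarrow> K \<ge> 0 \<Longrightarrow> T \<le> K"
proof (rule ccontr)
  assume a: "T\<^sup>2 \<le> K * T" "K \<ge> 0" "\<not> T \<le> K"
  then have "K * T < T * T" by (intro mult_strict_right_mono) auto
  with a show False by (simp add: power2_eq_square)
qed

lemma ub_vartheta:
  assumes "zero_on_edges E Z" "trace_mat n Z = real k" "psd n Z"
  shows "sum_entries n Z \<le> real k * real chi'"
  using tr_bound[OF assms(3,1)] assms(2) by (simp add: sum_entries_def qf_def mult.commute)

lemma ub_theta3:
  assumes "sym_mat n Z" "zero_on_edges E Z" "psd (n + 1) (bordered (real k) (\<lambda>i. Z i i) Z)"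
  shows "trace_mat n Z \<le> real k * real chi'"
proof -
  have b: "psd (Suc n) (bordered (real k) (\<lambda>i. Z i i) Z)" using assms(3) by simp
  have "psd n Z" using assms(1) bordered_sub[OF b] by (simp add: psd_qf)
  have "(trace_mat n Z)\<^sup>2 \<le> real k * qf n Z (\<lambda>_. 1)"
    using bordered_schur[OF b, of "\<lambda>_. 1"] k1 by (simp add: trace_mat_def)
  also have "\<dots> \<le> real k * (real chi' * trace_mat n Z)"
    using tr_bound[OF \<open>psd n Z\<close> assms(2)] by (intro mult_left_mono) auto
  finally have "(trace_mat n Z)\<^sup>2 \<le> (real k * real chi') * trace_mat n Z" by (simp only: mult.assoc)
  then show ?thesis by (rule sq_le) simp
qed

lemma ub_theta2:
  assumes "theta2_feasible n E k Z X"
  shows "trace_mat n Z \<le> real k * real chi'"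
proof -
  define W where "W = (\<lambda>i j. Z i j + (real k - 1) * X i j)"
  have sZ: "sym_mat n Z" and sX: "sym_mat n X" and zZ: "zero_on_edges E Z"
    and pY: "psd n (\<lambda>i j. Z i j - X i j)"
    and b: "psd (Suc n) (bordered 1 (\<lambda>i. Z i i) W)"
    using assms unfolding theta2_feasible_def W_def by auto
  have pW: "psd n W" using bordered_sub[OF b] sZ sX by (auto simp: psd_qf sym_mat_def W_def)
  have "(trace_mat n Z)\<^sup>2 \<le> 1 * qf n W (\<lambda>_. 1)"
    using bordered_schur[OF b, of "\<lambda>_. 1"] by (simp add: trace_mat_def)
  also have "\<dots> \<le> real chi' * (\<Sum>b<chi'. qf n W (\<lambda>i. if c' i = b then 1 else 0))"
    using clique_bound[OF pW, of c' chi'] c'_lt by simp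
  finally have t1: "(trace_mat n Z)\<^sup>2 \<le> real chi' * (\<Sum>b<chi'. qf n W (\<lambda>i. if c' i = b then 1 else 0))" .
  have "(\<Sum>b<chi'. qf n W (\<lambda>i. if c' i = b then 1 else 0))
      \<le> (\<Sum>b<chi'. real k * (\<Sum>i<n. if c' i = b then Z i i else 0))"
  proof (intro sum_mono)
    fix b
    let ?v = "\<lambda>i. if c' i = b then 1 else (0::real)"
    have "qf n W ?v = qf n (\<lambda>i j. real k * Z i j + (- (real k - 1)) * (Z i j - X i j)) ?v"
      by (rule qf_cong) (auto simp: W_def algebra_simps)
    also have "\<dots> = real k * qf n Z ?v - (real k - 1) * qf n (\<lambda>i j. Z i j - X i j) ?v"
      unfolding qf_lin by (simp add: algebra_simps)
    also have "\<dots> \<le> real k * qf n Z ?v"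
      using pY k1 by (simp add: psd_qf)
    also have "qf n Z ?v = (\<Sum>i<n. if c' i = b then Z i i else 0)"
      by (rule clique_qf) (use zZ clique in \<open>auto simp: zero_on_edges_def\<close>)
    finally show "qf n W ?v \<le> real k * (\<Sum>i<n. if c' i = b then Z i i else 0)" .
  qed
  also have "\<dots> = real k * trace_mat n Z"
    unfolding trace_mat_def by (simp add: sum_distrib_left[symmetric] sum_classes c'_lt)
  finally have "(\<Sum>b<chi'. qf n W (\<lambda>i. if c' i = b then 1 else 0)) \<le> real k * trace_mat n Z" .
  then have "real chi' * (\<Sum>b<chi'. qf n W (\<lambda>i. if c' i = b then 1 else 0)) \<le> real chi' * (real k * trace_mat n Z)"
    by (intro mult_left_mono) auto
  with t1 have "(trace_mat n Z)\<^sup>2 \<le> (real k * real chi') * trace_mat n Z"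
    by (simp add: algebra_simps)
  then show ?thesis by (rule sq_le) simp
qed

end


lemma qf_scale: "qf m (\<lambda>i j. r * A i j) x = r * qf m A x"
  unfolding qf_def by (simp add: sum_distrib_left algebra_simps)

lemma qf_minus: "qf m (\<lambda>i j. A i j - B i j) x = qf m A x - qf m B x"
  unfolding qf_def by (simp add: sum_subtractf algebra_simps)

lemma sym_bordered: "sym_mat m M \<Longrightarrow> sym_mat (Suc m) (bordered cc d M)"
  unfolding sym_mat_def bordered_def by auto

context cfg begin

definition fa :: "nat \<Rightarrow> nat \<Rightarrow> real" where "fa a i = (if c i = a then 1 else 0)"
definition uu :: "nat \<Rightarrow> real" where "uu i = (if c i < k then 1 else 0)"
definition Z1 :: "nat \<Rightarrow> nat \<Rightarrow> real" where "Z1 i j = (if c i = c j \<and> c i < k then 1 else 0)"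
definition X1 :: "nat \<Rightarrow> nat \<Rightarrow> real" where "X1 i j = (uu i * uu j - Z1 i j) / (real k - 1)"
definition Zt :: "nat \<Rightarrow> nat \<Rightarrow> real" where "Zt i j = Z1 i j / real chi'"

lemma Z1_gram: "Z1 i j = (\<Sum>a<k. fa a i * fa a j)"
proof -
  have "(\<Sum>a<k. fa a i * fa a j) = (\<Sum>a<k. if c i = a then (if c j = c i then 1 else 0) else 0)"
    by (intro sum.cong) (auto simp: fa_def)
  then show ?thesis by (simp add: Z1_def)
qed

lemma uu_sum: "uu i = (\<Sum>a<k. fa a i)"
proof -
  have "(\<Sum>a<k. fa a i) = (\<Sum>a<k. if c i = a then 1 else 0)"
    by (intro sum.cong) (auto simp: fa_def)
  then show ?thesis by (simp add: uu_def)
qed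

lemma Z1_diag: "Z1 i i = uu i" by (simp add: Z1_def uu_def)

lemma qf_Z1: "qf n Z1 x = (\<Sum>a<k. (\<Sum>i<n. fa a i * x i)\<^sup>2)"
proof -
  have "Z1 = (\<lambda>i j. \<Sum>a<k. fa a i * fa a j)" by (intro ext) (rule Z1_gram)
  then show ?thesis by (simp add: qf_gram)
qed

lemma sum_fa: "a < k \<Longrightarrow> (\<Sum>i<n. fa a i) = real chi'"
proof -
  assume a: "a < k"
  have "(\<Sum>i<n. fa a i) = (\<Sum>i<n. of_bool (c i = a))" by (intro sum.cong) (auto simp: fa_def)
  also have "\<dots> = real (card ({..<n} \<inter> {i. c i = a}))" by simp
  also have "{..<n} \<inter> {i. c i = a} = {v\<in>{..<n}. c v \<in> {a}}" by auto
  also have "card \<dots> = chi'" using card_cls[of "{a}"] a kchi by simp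
  finally show ?thesis .
qed

lemma sum_uu: "(\<Sum>i<n. uu i) = real k * real chi'"
proof -
  have "(\<Sum>i<n. uu i) = (\<Sum>i<n. of_bool (c i < k))" by (intro sum.cong) (auto simp: uu_def)
  also have "\<dots> = real (card ({..<n} \<inter> {i. c i < k}))" by simp
  also have "{..<n} \<inter> {i. c i < k} = {v\<in>{..<n}. c v \<in> {..<k}}" by auto
  also have "card \<dots> = k * chi'" using card_cls[of "{..<k}"] kchi by simp
  finally show ?thesis by simp
qed

lemma uux: "(\<Sum>i<n. uu i * x i) = (\<Sum>a<k. \<Sum>i<n. fa a i * x i)"
  by (simp add: uu_sum sum_distrib_right) (rule sum.swap)

lemma Z1_edges: "zero_on_edges E Z1"
  unfolding zero_on_edges_def Z1_def using edge_col by auto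

lemma Z1_sym: "sym_mat n Z1" unfolding sym_mat_def Z1_def by auto

lemma tr_Z1: "trace_mat n Z1 = real k * real chi'"
  unfolding trace_mat_def Z1_diag by (rule sum_uu)

lemma fa_sq: "fa a i * fa a i = fa a i" by (simp add: fa_def)

lemma CS_class: "a < k \<Longrightarrow> (\<Sum>i<n. fa a i * x i)\<^sup>2 \<le> real chi' * (\<Sum>i<n. fa a i * (x i)\<^sup>2)"
proof -
  assume a: "a < k"
  have "(\<Sum>i<n. fa a i * x i)\<^sup>2 = (\<Sum>i<n. fa a i * (fa a i * x i))\<^sup>2"
    by (simp add: fa_sq flip: mult.assoc)
  also have "\<dots> \<le> (\<Sum>i<n. (fa a i)\<^sup>2) * (\<Sum>i<n. (fa a i * x i)\<^sup>2)"
    by (rule Cauchy_Schwarz_ineq_sum)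
  also have "(\<Sum>i<n. (fa a i)\<^sup>2) = real chi'" using sum_fa[OF a] by (simp add: power2_eq_square fa_sq)
  also have "(\<Sum>i<n. (fa a i * x i)\<^sup>2) = (\<Sum>i<n. fa a i * (x i)\<^sup>2)"
    by (intro sum.cong) (auto simp: fa_def)
  finally show ?thesis .
qed


lemma Zt_qf: "qf n Zt x = qf n Z1 x / real chi'"
proof -
  have "qf n Zt x = qf n (\<lambda>i j. (1 / real chi') * Z1 i j) x" by (rule qf_cong) (auto simp: Zt_def)
  then show ?thesis using qf_scale[of n "1 / real chi'" Z1 x] by simp
qed

lemma vt_feas: "sym_mat n Zt \<and> zero_on_edges E Zt \<and> trace_mat n Zt = real k \<and> psd n Zt \<and>
   psd n (\<lambda>i j. id_mat i j - Zt i j) \<and> nonneg_mat n Zt \<and> sum_entries n Zt = real k * real chi'"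
proof (intro conjI)
  have cp: "real chi' > 0" using chi'_pos by simp
  show s: "sym_mat n Zt" using Z1_sym unfolding sym_mat_def Zt_def by auto
  show "zero_on_edges E Zt" using Z1_edges unfolding zero_on_edges_def Zt_def by auto
  show "trace_mat n Zt = real k"
    using tr_Z1 cp unfolding trace_mat_def Zt_def by (simp add: sum_divide_distrib[symmetric])
  show "psd n Zt" using s by (simp add: psd_qf Zt_qf qf_Z1 sum_nonneg)
  show "nonneg_mat n Zt" unfolding nonneg_mat_def Zt_def Z1_def by auto
  have "sum_entries n Zt = qf n Zt (\<lambda>_. 1)" by (simp add: sum_entries_def qf_def)
  also have "\<dots> = (\<Sum>a<k. (real chi')\<^sup>2) / real chi'" by (simp add: Zt_qf qf_Z1 sum_fa)
  also have "\<dots> = real k * real chi'" using cp by (simp add: power2_eq_square)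
  finally show "sum_entries n Zt = real k * real chi'" .
  show "psd n (\<lambda>i j. id_mat i j - Zt i j)"
    unfolding psd_qf
  proof (intro conjI allI)
    show "sym_mat n (\<lambda>i j. id_mat i j - Zt i j)" using s by (simp add: sym_mat_def id_mat_def)
    fix x
    have e1: "qf n (\<lambda>i j. id_mat i j - Zt i j) x = qf n id_mat x - qf n Zt x" by (rule qf_minus)
    have e2: "qf n id_mat x = (\<Sum>i<n. 1 * (x i)\<^sup>2)"
      using qf_diag[of n "\<lambda>_. 1" x] by (simp add: id_mat_def[abs_def])
    have "qf n Zt x = (\<Sum>a<k. (\<Sum>i<n. fa a i * x i)\<^sup>2 / real chi')"
      by (simp add: Zt_qf qf_Z1 sum_divide_distrib)
    also have "\<dots> \<le> (\<Sum>a<k. \<Sum>i<n. fa a i * (x i)\<^sup>2)"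
    proof (intro sum_mono)
      fix a assume "a \<in> {..<k}"
      then show "(\<Sum>i<n. fa a i * x i)\<^sup>2 / real chi' \<le> (\<Sum>i<n. fa a i * (x i)\<^sup>2)"
        using CS_class[of a x] cp by (simp add: divide_le_eq mult.commute)
    qed
    also have "\<dots> = (\<Sum>i<n. uu i * (x i)\<^sup>2)" by (rule uux[symmetric])
    also have "\<dots> \<le> (\<Sum>i<n. 1 * (x i)\<^sup>2)" by (intro sum_mono) (auto simp: uu_def)
    finally have "qf n Zt x \<le> qf n id_mat x" using e2 by simp
    then show "0 \<le> qf n (\<lambda>i j. id_mat i j - Zt i j) x" using e1 by simp
  qed
qed

lemma t3_feas: "sym_mat n Z1 \<and> zero_on_edges E Z1 \<and> (\<forall>i<n. Z1 i i \<le> 1) \<and> nonneg_mat n Z1 \<and>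
      psd (n + 1) (bordered (real k) (\<lambda>i. Z1 i i) Z1)"
proof (intro conjI)
  show "sym_mat n Z1" "zero_on_edges E Z1" by (rule Z1_sym, rule Z1_edges)
  show "\<forall>i<n. Z1 i i \<le> 1" "nonneg_mat n Z1" by (auto simp: Z1_def nonneg_mat_def)
  show "psd (n + 1) (bordered (real k) (\<lambda>i. Z1 i i) Z1)"
    unfolding psd_qf Suc_eq_plus1[symmetric]
  proof (intro conjI allI)
    show "sym_mat (Suc n) (bordered (real k) (\<lambda>i. Z1 i i) Z1)" by (rule sym_bordered[OF Z1_sym])
    fix y
    define A where "A a = (\<Sum>i<n. fa a i * y (Suc i))" for a
    have "qf (Suc n) (bordered (real k) (\<lambda>i. Z1 i i) Z1) y
        = real k * (y 0)\<^sup>2 + 2 * y 0 * (\<Sum>a<k. A a) + (\<Sum>a<k. (A a)\<^sup>2)"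
      by (simp add: qf_bordered Z1_diag uux qf_Z1 A_def)
    also have "\<dots> = (\<Sum>a<k. (y 0 + A a)\<^sup>2)"
      by (simp add: power2_sum sum.distrib sum_distrib_left)
    finally show "0 \<le> qf (Suc n) (bordered (real k) (\<lambda>i. Z1 i i) Z1) y"
      by (simp add: sum_nonneg)
  qed
qed


lemma W_eq: "Z1 i j + (real k - 1) * X1 i j = uu i * uu j"
proof (cases "k = 1")
  case True
  have "Z1 i j = uu i * uu j" unfolding Z1_def uu_def using True by auto
  then show ?thesis using True by simp
next
  case False
  then have "real k - 1 \<noteq> 0" using k1 by simp
  then show ?thesis by (simp add: X1_def)
qed

lemma X1_qf: "qf n X1 x = ((\<Sum>a<k. \<Sum>i<n. fa a i * x i)\<^sup>2 - (\<Sum>a<k. (\<Sum>i<n. fa a i * x i)\<^sup>2)) / (real k - 1)"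
proof -
  have "qf n X1 x = qf n (\<lambda>i j. (1 / (real k - 1)) * (uu i * uu j) + (- 1 / (real k - 1)) * Z1 i j) x"
    by (rule qf_cong) (auto simp: X1_def diff_divide_distrib)
  also have "\<dots> = (1 / (real k - 1)) * (\<Sum>i<n. uu i * x i)\<^sup>2 + (- 1 / (real k - 1)) * qf n Z1 x"
    by (simp only: qf_lin qf_rank1)
  finally show ?thesis by (simp add: uux qf_Z1 diff_divide_distrib)
qed

lemma t1_feas: "theta2_feasible n E k Z1 X1 \<and>
      (\<forall>i<n. \<forall>j<n. i > j \<longrightarrow> 1 - Z1 i i - Z1 j j + Z1 i j + (real k - 1) * X1 i j \<ge> 0) \<and>
      (\<forall>i<n. \<forall>j<n. i \<noteq> j \<longrightarrow> Z1 i i - Z1 i j - (real k - 1) * X1 i j \<ge> 0)"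
proof (intro conjI allI impI)
  have kk: "real k - 1 \<ge> 0" using k1 by simp
  fix i j
  show "1 - Z1 i i - Z1 j j + Z1 i j + (real k - 1) * X1 i j \<ge> 0"
    using W_eq[of i j] by (simp add: Z1_diag uu_def add.assoc)
  show "Z1 i i - Z1 i j - (real k - 1) * X1 i j \<ge> 0"
    using W_eq[of i j] by (simp add: Z1_diag uu_def algebra_simps)
next
  have kk: "real k - 1 \<ge> 0" using k1 by simp
  have sZ: "sym_mat n Z1" by (rule Z1_sym)
  have sX: "sym_mat n X1" using Z1_sym by (auto simp: sym_mat_def X1_def)
  show "theta2_feasible n E k Z1 X1"
    unfolding theta2_feasible_def
  proof (intro conjI)
    show "sym_mat n Z1" "sym_mat n X1" "zero_on_edges E Z1" by (rule sZ, rule sX, rule Z1_edges)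
    show "\<forall>i<n. X1 i i = 0" by (simp add: X1_def Z1_diag uu_def)
    show "nonneg_mat n Z1" by (auto simp: Z1_def nonneg_mat_def)
    show "nonneg_mat n X1" unfolding nonneg_mat_def X1_def
      using kk by (auto simp: Z1_def uu_def intro!: divide_nonneg_nonneg)
    show "psd n (\<lambda>i j. Z1 i j - X1 i j)"
      unfolding psd_qf
    proof (intro conjI allI)
      show "sym_mat n (\<lambda>i j. Z1 i j - X1 i j)" using sZ sX by (simp add: sym_mat_def)
      fix x
      define A where "A a = (\<Sum>i<n. fa a i * x i)" for a
      have cs: "(\<Sum>a<k. A a)\<^sup>2 \<le> (\<Sum>a<k. (A a)\<^sup>2) * real k"
        using sum_squared_le_sum_of_squares[of A "{..<k}"] by simp
      have q: "qf n (\<lambda>i j. Z1 i j - X1 i j) x = (\<Sum>a<k. (A a)\<^sup>2) - ((\<Sum>a<k. A a)\<^sup>2 - (\<Sum>a<k. (A a)\<^sup>2)) / (real k - 1)"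
        by (simp add: qf_minus qf_Z1 X1_qf A_def)
      show "0 \<le> qf n (\<lambda>i j. Z1 i j - X1 i j) x"
      proof (cases "k = 1")
        case True
        then show ?thesis using q by (simp add: sum_nonneg)
      next
        case False
        then have kp: "real k - 1 > 0" using k1 by simp
        have "((\<Sum>a<k. A a)\<^sup>2 - (\<Sum>a<k. (A a)\<^sup>2)) \<le> (real k - 1) * (\<Sum>a<k. (A a)\<^sup>2)"
          using cs by (simp add: algebra_simps)
        then have "((\<Sum>a<k. A a)\<^sup>2 - (\<Sum>a<k. (A a)\<^sup>2)) / (real k - 1) \<le> (\<Sum>a<k. (A a)\<^sup>2)"
          using kp by (simp add: divide_le_eq mult.commute)
        then show ?thesis using q by simp
      qed
    qed
    have bW: "bordered 1 (\<lambda>i. Z1 i i) (\<lambda>i j. Z1 i j + (real k - 1) * X1 i j) = bordered 1 uu (\<lambda>i j. uu i * uu j)"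
      by (simp add: W_eq Z1_diag)
    show "psd (n + 1) (bordered 1 (\<lambda>i. Z1 i i) (\<lambda>i j. Z1 i j + (real k - 1) * X1 i j))"
      unfolding bW psd_qf Suc_eq_plus1[symmetric]
    proof (intro conjI allI)
      show "sym_mat (Suc n) (bordered 1 uu (\<lambda>i j. uu i * uu j))"
        by (rule sym_bordered) (simp add: sym_mat_def)
      fix y
      have "qf (Suc n) (bordered 1 uu (\<lambda>i j. uu i * uu j)) y = (y 0 + (\<Sum>i<n. uu i * y (Suc i)))\<^sup>2"
        by (simp add: qf_bordered qf_rank1 power2_sum)
      then show "0 \<le> qf (Suc n) (bordered 1 uu (\<lambda>i j. uu i * uu j)) y" by simp
    qed
  qed
qed


lemma vt: "vartheta_k n E k = real k * real chi'"
  unfolding vartheta_k_def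
proof (rule cSup_eq_maximum)
  show "real k * real chi' \<in> {sum_entries n Z |Z. sym_mat n Z \<and> zero_on_edges E Z \<and>
      trace_mat n Z = real k \<and> psd n Z \<and> psd n (\<lambda>i j. id_mat i j - Z i j)}"
    using vt_feas by (intro CollectI exI[of _ Zt]) auto
  show "\<And>x. x \<in> {sum_entries n Z |Z. sym_mat n Z \<and> zero_on_edges E Z \<and>
      trace_mat n Z = real k \<and> psd n Z \<and> psd n (\<lambda>i j. id_mat i j - Z i j)} \<Longrightarrow> x \<le> real k * real chi'"
    using ub_vartheta by auto
qed

lemma vt': "vartheta'_k n E k = real k * real chi'"
  unfolding vartheta'_k_def
proof (rule cSup_eq_maximum)
  show "real k * real chi' \<in> {sum_entries n Z |Z. sym_mat n Z \<and> zero_on_edges E Z \<and>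
      trace_mat n Z = real k \<and> psd n Z \<and> psd n (\<lambda>i j. id_mat i j - Z i j) \<and> nonneg_mat n Z}"
    using vt_feas by (intro CollectI exI[of _ Zt]) auto
  show "\<And>x. x \<in> {sum_entries n Z |Z. sym_mat n Z \<and> zero_on_edges E Z \<and>
      trace_mat n Z = real k \<and> psd n Z \<and> psd n (\<lambda>i j. id_mat i j - Z i j) \<and> nonneg_mat n Z} \<Longrightarrow> x \<le> real k * real chi'"
    using ub_vartheta by auto
qed

lemma t3: "theta3_k n E k = real k * real chi'"
  unfolding theta3_k_def
proof (rule cSup_eq_maximum)
  show "real k * real chi' \<in> {trace_mat n Z | Z. sym_mat n Z \<and> zero_on_edges E Z \<and>
      (\<forall>i<n. Z i i \<le> 1) \<and> nonneg_mat n Z \<and> psd (n + 1) (bordered (real k) (\<lambda>i. Z i i) Z)}"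
    using t3_feas tr_Z1 by (intro CollectI exI[of _ Z1]) auto
  show "\<And>x. x \<in> {trace_mat n Z | Z. sym_mat n Z \<and> zero_on_edges E Z \<and>
      (\<forall>i<n. Z i i \<le> 1) \<and> nonneg_mat n Z \<and> psd (n + 1) (bordered (real k) (\<lambda>i. Z i i) Z)} \<Longrightarrow> x \<le> real k * real chi'"
    using ub_theta3 by auto
qed

lemma t2: "theta2_k n E k = real k * real chi'"
  unfolding theta2_k_def
proof (rule cSup_eq_maximum)
  show "real k * real chi' \<in> {trace_mat n Z | Z. \<exists>X. theta2_feasible n E k Z X}"
    using t1_feas tr_Z1 by (intro CollectI exI[of _ Z1]) auto
  show "\<And>x. x \<in> {trace_mat n Z | Z. \<exists>X. theta2_feasible n E k Z X} \<Longrightarrow> x \<le> real k * real chi'"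
    using ub_theta2 by auto
qed

lemma t1: "theta1_k n E k = real k * real chi'"
  unfolding theta1_k_def
proof (rule cSup_eq_maximum)
  show "real k * real chi' \<in> {trace_mat n Z | Z. \<exists>X. theta2_feasible n E k Z X \<and>
      (\<forall>i<n. \<forall>j<n. i > j \<longrightarrow> 1 - Z i i - Z j j + Z i j + (real k - 1) * X i j \<ge> 0) \<and>
      (\<forall>i<n. \<forall>j<n. i \<noteq> j \<longrightarrow> Z i i - Z i j - (real k - 1) * X i j \<ge> 0)}"
    using t1_feas tr_Z1 by (intro CollectI exI[of _ Z1] conjI exI[of _ X1]) auto
  show "\<And>x. x \<in> {trace_mat n Z | Z. \<exists>X. theta2_feasible n E k Z X \<and>
      (\<forall>i<n. \<forall>j<n. i > j \<longrightarrow> 1 - Z i i - Z j j + Z i j + (real k - 1) * X i j \<ge> 0) \<and>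
      (\<forall>i<n. \<forall>j<n. i \<noteq> j \<longrightarrow> Z i i - Z i j - (real k - 1) * X i j \<ge> 0)} \<Longrightarrow> x \<le> real k * real chi'"
    using ub_theta2 by auto
qed

end

lemma col_exists:
  assumes "\<forall>e\<in>F. \<exists>i j. e = {i, j} \<and> i \<noteq> j"
  shows "proper_col_on {0..<n} F (chromatic_number n F) (SOME c. proper_col_on {0..<n} F (chromatic_number n F) c)"
proof -
  have "proper_col_on {0..<n} F n id"
    unfolding proper_col_on_def using assms by (auto simp: doubleton_eq_iff)
  then have "\<exists>c. proper_col_on {0..<n} F n c" by blast
  then have "Ex (proper_col_on {0..<n} F (LEAST k. Ex (proper_col_on {0..<n} F k)))"
    by (rule LeastI[of "\<lambda>k. Ex (proper_col_on {0..<n} F k)" n])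
  then have "\<exists>c. proper_col_on {0..<n} F (chromatic_number n F) c"
    unfolding chromatic_number_def .
  then show ?thesis by (rule someI_ex)
qed

theorem proposition1:
  fixes n k :: nat and E :: "nat set set"
  assumes "simple_graph n E"
    and "n = chromatic_number n (compl_graph n E) * chromatic_number n E"
    and "1 \<le> k" and "k \<le> chromatic_number n E"
  shows "vartheta_k n E k = vartheta'_k n E k \<and>
         vartheta'_k n E k = theta1_k n E k \<and>
         theta1_k n E k = theta2_k n E k \<and>
         theta2_k n E k = theta3_k n E k \<and>
         theta3_k n E k = real (k * stability_number n E) \<and>
         real (k * stability_number n E) = real (alpha_k n E k)"
proof -
  have npos: "0 < n"
  proof (rule ccontr)
    assume "\<not> 0 < n"
    then have "n = 0" by simp
    then have "proper_col_on {0..<n} E 0 id" by (simp add: proper_col_on_def)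
    then have "chromatic_number n E = 0" unfolding chromatic_number_def by (intro Least_eq_0) blast
    then show False using assms by simp
  qed
  have e1: "\<forall>e\<in>E. \<exists>i j. e = {i, j} \<and> i \<noteq> j" using assms(1) unfolding simple_graph_def by blast
  have e2: "\<forall>e\<in>compl_graph n E. \<exists>i j. e = {i, j} \<and> i \<noteq> j" unfolding compl_graph_def by blast
  interpret cfg n E k "SOME c. proper_col_on {0..<n} E (chromatic_number n E) c"
    "SOME c. proper_col_on {0..<n} (compl_graph n E) (chromatic_number n (compl_graph n E)) c"
    "chromatic_number n E" "chromatic_number n (compl_graph n E)"
    by unfold_locales (use assms npos col_exists[OF e1] col_exists[OF e2] in auto)
  show ?thesis using vt vt' t1 t2 t3 stab alphak by simp
qed


end
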